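(* Let $k$ be a number field, $\mathcal G$ a finite group, $H$ a finite abelian group, $\mu:\mathcal G\to\mathrm{Aut}(H)$ an action, and $\tau\in H$. Then $G_{k,\mu,\tau}$ is a subgroup of $\mathrm{Gal}(k(\zeta_{o(\tau)})/k)$.
   Context: $o(\tau)$ is the order of $\tau$ and $\zeta_t$ a primitive $t$-th root of unity. $\nu_{k,\tau}:\mathrm{Gal}(k(\zeta_{o(\tau)})/k)\to(\mathbb Z/o(\tau))^*$ is given by $g(\zeta_{o(\tau)})=\zeta_{o(\tau)}^{\nu_{k,\tau}(g)}$, and $G_{k,\mu,\tau}=\{g\in\mathrm{Gal}(k(\zeta_{o(\tau)})/k):\exists g_1\in\mathcal G,\ \mu(g_1)(\tau)=\tau^{\nu_{k,\tau}(g)}\}$. *)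

theory Defs
  imports "HOL-Analysis.Analysis" "HOL-Algebra.Algebra"
begin

text \<open>Subfields of the complex numbers (every number field embeds in the complex numbers).\<close>
definition cx_subfield :: "complex set \<Rightarrow> bool" where
  "cx_subfield K \<longleftrightarrow> 0 \<in> K \<and> 1 \<in> K \<and>
     (\<forall>x\<in>K. \<forall>y\<in>K. x + y \<in> K \<and> x * y \<in> K) \<and> (\<forall>x\<in>K. - x \<in> K) \<and>
     (\<forall>x\<in>K. x \<noteq> 0 \<longrightarrow> inverse x \<in> K)"

definition number_field :: "complex set \<Rightarrow> bool" where
  "number_field k \<longleftrightarrow> cx_subfield k \<and>
     (\<exists>B. finite B \<and> B \<subseteq> k \<and>
        (\<forall>x\<in>k. \<exists>c :: complex \<Rightarrow> rat. x = (\<Sum>b\<in>B. of_rat (c b) * b)))"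

definition field_adjoin :: "complex set \<Rightarrow> complex set \<Rightarrow> complex set" where
  "field_adjoin k S = \<Inter>{K. cx_subfield K \<and> k \<union> S \<subseteq> K}"

definition zeta :: "nat \<Rightarrow> complex" where
  "zeta t = cis (2 * pi / real t)"

text \<open>Gal(K/k): field automorphisms of K fixing k pointwise (extended by the identity outside K).\<close>
definition Gal_set :: "complex set \<Rightarrow> complex set \<Rightarrow> (complex \<Rightarrow> complex) set" where
  "Gal_set K k = {\<sigma>. bij_betw \<sigma> K K \<and>
     (\<forall>x\<in>K. \<forall>y\<in>K. \<sigma> (x + y) = \<sigma> x + \<sigma> y \<and> \<sigma> (x * y) = \<sigma> x * \<sigma> y) \<and>
     (\<forall>x\<in>k. \<sigma> x = x) \<and> (\<forall>x. x \<notin> K \<longrightarrow> \<sigma> x = x)}"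

definition Gal_group :: "complex set \<Rightarrow> complex set \<Rightarrow> (complex \<Rightarrow> complex) monoid" where
  "Gal_group K k = \<lparr>carrier = Gal_set K k, mult = (\<circ>), one = id\<rparr>"

definition cyc_char :: "nat \<Rightarrow> (complex \<Rightarrow> complex) \<Rightarrow> nat" where
  "cyc_char t g = (SOME a. a < t \<and> coprime a t \<and> g (zeta t) = zeta t ^ a)"

definition G_kmt ::
  "complex set \<Rightarrow> ('g, 'c) monoid_scheme \<Rightarrow> ('g \<Rightarrow> 'h \<Rightarrow> 'h) \<Rightarrow> ('h, 'd) monoid_scheme \<Rightarrow> 'h
     \<Rightarrow> (complex \<Rightarrow> complex) set" where
  "G_kmt k GG \<mu> H \<tau> =
     (let t = group.ord H \<tau> in
      {g \<in> Gal_set (field_adjoin k {zeta t}) k.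
         \<exists>g1 \<in> carrier GG. \<mu> g1 \<tau> = \<tau> [^]\<^bsub>H\<^esub> cyc_char t g})"

end

theory Submission imports Defs "HOL-Number_Theory.Number_Theory" begin
lemma zeta_pow: "zeta t ^ n = exp (2 * of_real pi * \<i> * of_nat n / of_nat t)"
proof -
  have "zeta t ^ n = cis (real n * (2 * pi / real t))"
    unfolding zeta_def by (rule Complex.DeMoivre)
  also have "\<dots> = exp (\<i> * complex_of_real (real n * (2 * pi / real t)))"
    by (rule cis_conv_exp)
  also have "complex_of_real (real n * (2 * pi / real t)) = of_nat n * (2 * of_real pi) / of_nat t"
    by simp
  finally show ?thesis by (simp add: mult.commute mult.left_commute)
qed
lemma Gal_setD:
  assumes "g \<in> Gal_set K k"
  shows "bij_betw g K K" "\<And>x y. x\<in>K \<Longrightarrow> y\<in>K \<Longrightarrow> g (x+y) = g x + g y"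
    "\<And>x y. x\<in>K \<Longrightarrow> y\<in>K \<Longrightarrow> g (x*y) = g x * g y"
    "\<And>x. x \<in> k \<Longrightarrow> g x = x" "\<And>x. x \<notin> K \<Longrightarrow> g x = x"
  using assms unfolding Gal_set_def mem_Collect_eq by blast+
lemma Gal_setI:
  assumes "bij_betw g K K" "\<And>x y. x\<in>K \<Longrightarrow> y\<in>K \<Longrightarrow> g (x+y) = g x + g y"
    "\<And>x y. x\<in>K \<Longrightarrow> y\<in>K \<Longrightarrow> g (x*y) = g x * g y"
    "\<And>x. x \<in> k \<Longrightarrow> g x = x" "\<And>x. x \<notin> K \<Longrightarrow> g x = x"
  shows "g \<in> Gal_set K k"
  using assms unfolding Gal_set_def mem_Collect_eq by blast
lemma Gal_set_comp:
  assumes g: "g \<in> Gal_set K k" and h: "h \<in> Gal_set K k"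
  shows "g \<circ> h \<in> Gal_set K k"
proof (rule Gal_setI)
  note G = Gal_setD[OF g] and Hh = Gal_setD[OF h]
  have hK: "\<And>x. x \<in> K \<Longrightarrow> h x \<in> K" by (rule bij_betw_apply[OF Hh(1)])
  show "bij_betw (g \<circ> h) K K" by (rule bij_betw_trans[OF Hh(1) G(1)])
  fix x y assume "x \<in> K" "y \<in> K"
  then show "(g \<circ> h) (x + y) = (g \<circ> h) x + (g \<circ> h) y" "(g \<circ> h) (x * y) = (g \<circ> h) x * (g \<circ> h) y"
    by (simp_all add: G(2,3) Hh(2,3) hK)
next
  fix x show "x \<in> k \<Longrightarrow> (g \<circ> h) x = x" by (simp add: Gal_setD(4)[OF g] Gal_setD(4)[OF h])
  show "x \<notin> K \<Longrightarrow> (g \<circ> h) x = x" by (simp add: Gal_setD(5)[OF g] Gal_setD(5)[OF h])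
qed
lemma Gal_set_inv:
  assumes K: "cx_subfield K" and kK: "k \<subseteq> K" and g: "g \<in> Gal_set K k"
  defines "g' \<equiv> (\<lambda>x. if x \<in> K then inv_into K g x else x)"
  shows "g' \<in> Gal_set K k" "g' \<circ> g = id"
proof -
  note G = Gal_setD[OF g]
  have bg: "bij_betw g K K" by (rule G(1))
  have Kadd: "\<And>x y. x\<in>K \<Longrightarrow> y\<in>K \<Longrightarrow> x+y \<in> K" and Kmul: "\<And>x y. x\<in>K \<Longrightarrow> y\<in>K \<Longrightarrow> x*y \<in> K"
    using K unfolding cx_subfield_def by simp_all
  have b': "bij_betw (inv_into K g) K K" using bg by (rule bij_betw_inv_into)
  have bg': "bij_betw g' K K"
    using b' by (rule bij_betw_cong[THEN iffD1, rotated]) (simp add: g'_def)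
  have g'K: "\<And>x. x \<in> K \<Longrightarrow> g' x \<in> K" by (rule bij_betw_apply[OF bg'])
  have gg': "\<And>x. x \<in> K \<Longrightarrow> g (g' x) = x" unfolding g'_def using bg
    by (simp add: bij_betw_inv_into_right)
  have g'g: "\<And>x. x \<in> K \<Longrightarrow> g' (g x) = x" unfolding g'_def using bg
    by (simp add: bij_betw_apply bij_betw_inv_into_left)
  show "g' \<in> Gal_set K k"
  proof (rule Gal_setI[OF bg'])
    fix x y assume that: "x \<in> K" "y \<in> K"
    have "g (g' x + g' y) = x + y" using G(2) g'K gg' that by simp
    thus "g' (x + y) = g' x + g' y" using g'g[of "g' x + g' y"] Kadd g'K that by metis
    have "g (g' x * g' y) = x * y" using G(3) g'K gg' that by simp
    thus "g' (x * y) = g' x * g' y" using g'g[of "g' x * g' y"] Kmul g'K that by metis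
  next
    fix x show "x \<in> k \<Longrightarrow> g' x = x" using g'g[of x] G(4)[of x] kK by auto
    show "x \<notin> K \<Longrightarrow> g' x = x" by (simp add: g'_def)
  qed
  show "g' \<circ> g = id"
  proof
    fix x show "(g' \<circ> g) x = id x"
    proof (cases "x \<in> K")
      case True thus ?thesis using g'g by simp
    next
      case False thus ?thesis using G(5)[OF False] by (simp add: g'_def)
    qed
  qed
qed

lemma Gal_group_group:
  assumes K: "cx_subfield K" and kK: "k \<subseteq> K"
  shows "group (Gal_group K k)"
proof (rule groupI)
  show "\<one>\<^bsub>Gal_group K k\<^esub> \<in> carrier (Gal_group K k)"
    unfolding Gal_group_def by (simp add: Gal_setI)
  fix x assume x: "x \<in> carrier (Gal_group K k)"
  show "\<one>\<^bsub>Gal_group K k\<^esub> \<otimes>\<^bsub>Gal_group K k\<^esub> x = x" by (simp add: Gal_group_def)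
  show "\<exists>y\<in>carrier (Gal_group K k). y \<otimes>\<^bsub>Gal_group K k\<^esub> x = \<one>\<^bsub>Gal_group K k\<^esub>"
    using Gal_set_inv[OF K kK, of x] x unfolding Gal_group_def by auto
next
  fix x y assume "x \<in> carrier (Gal_group K k)" "y \<in> carrier (Gal_group K k)"
  thus "x \<otimes>\<^bsub>Gal_group K k\<^esub> y \<in> carrier (Gal_group K k)"
    using Gal_set_comp unfolding Gal_group_def by simp
qed (simp add: Gal_group_def comp_assoc)

lemma cx_subfield_adjoin: "cx_subfield (field_adjoin k S)"
  unfolding field_adjoin_def cx_subfield_def
  apply (intro conjI ballI impI)
  apply (simp_all only: Inter_iff mem_Collect_eq)
  apply blast+
  done

lemma adjoin_sup: "k \<subseteq> field_adjoin k S" "S \<subseteq> field_adjoin k S"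
  unfolding field_adjoin_def by auto

lemma zeta_pow_eq: "t \<ge> 1 \<Longrightarrow> zeta t ^ j = zeta t ^ l \<longleftrightarrow> j mod t = l mod t"
  unfolding zeta_pow by (rule complex_root_unity_eq)

lemma zeta_root: assumes "t \<ge> 1" "z ^ t = (1::complex)" shows "\<exists>j<t. z = zeta t ^ j"
proof -
  have "z \<in> {z::complex. z^t = 1}" using assms(2) by simp
  then obtain j where "j < t" "z = exp (2 * of_real pi * \<i> * of_nat j / of_nat t)"
    unfolding complex_roots_unity[OF assms(1)] by blast
  thus ?thesis unfolding zeta_pow[symmetric] by blast
qed

lemma Gal_pow:
  assumes K: "cx_subfield K" and kK: "k \<subseteq> K" and one: "1 \<in> k" and g: "g \<in> Gal_set K k"
    and z: "z \<in> K"
  shows "z ^ n \<in> K \<and> g (z ^ n) = g z ^ n"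
proof (induction n)
  case 0 thus ?case using one kK Gal_setD(4)[OF g one] by auto
next
  case (Suc n)
  have Kmul: "\<And>x y. x\<in>K \<Longrightarrow> y\<in>K \<Longrightarrow> x*y \<in> K" using K unfolding cx_subfield_def by simp
  have "z ^ Suc n = z * z ^ n" by simp
  thus ?case using Suc Kmul[OF z] Gal_setD(3)[OF g z] by simp
qed

lemma Gal_cyc:
  assumes K: "cx_subfield K" and kK: "k \<subseteq> K" and one: "1 \<in> k" and g: "g \<in> Gal_set K k"
    and z: "zeta t \<in> K" and t: "t \<ge> 1"
  shows "\<exists>a. a < t \<and> coprime a t \<and> g (zeta t) = zeta t ^ a"
proof -
  let ?z = "zeta t"
  note P = Gal_pow[OF K kK one g z]
  have zt: "?z ^ t = 1" using zeta_pow_eq[OF t, of t 0] by simp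
  have g1: "g 1 = 1" using Gal_setD(4)[OF g one] .
  have "g ?z ^ t = 1" using P[of t] zt g1 by simp
  then obtain j where j: "j < t" "g ?z = ?z ^ j" using zeta_root[OF t] by blast
  define d where "d = gcd j t"
  have d0: "d > 0" using t d_def by simp
  obtain a where a: "j = d * a" using d_def by (metis gcd_dvd1 dvdE)
  obtain b where b: "t = d * b" using d_def by (metis gcd_dvd2 dvdE)
  have b0: "b > 0" using b t by (cases b) auto
  have bd: "t div d = b" using b d0 by simp
  have "(g ?z) ^ b = ?z ^ (j * b)" using j by (simp add: power_mult)
  also have "j * b = t * a" using a b by simp
  also have "?z ^ (t * a) = 1" using zt by (simp add: power_mult)
  finally have "g (?z ^ b) = g 1" using P[of b] g1 by simp
  moreover have "inj_on g K" using Gal_setD(1)[OF g] bij_betw_def by blast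
  moreover have "1 \<in> K" using one kK by blast
  ultimately have "?z ^ b = 1" using P[of b] by (meson inj_onD)
  hence "?z ^ b = ?z ^ 0" by simp
  hence "b mod t = 0 mod t" using zeta_pow_eq[OF t, of b 0] by blast
  hence "t dvd b" by (simp add: mod_eq_0_iff_dvd)
  hence "t \<le> b" using b0 by (simp add: dvd_imp_le)
  hence "d * b \<le> 1 * b" using b by simp
  hence "d \<le> 1" using b0 mult_le_cancel2[of d b 1] by linarith
  hence "d = 1" using d0 by simp
  hence cp: "coprime j t" unfolding d_def by (rule gcd_eq_1_imp_coprime)
  show ?thesis by (rule exI[of _ j]) (intro conjI j cp)
qed

lemma cyc_char_spec:
  assumes K: "cx_subfield K" and kK: "k \<subseteq> K" and one: "1 \<in> k" and g: "g \<in> Gal_set K k"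
    and z: "zeta t \<in> K" and t: "t \<ge> 1"
  shows "cyc_char t g < t \<and> coprime (cyc_char t g) t \<and> g (zeta t) = zeta t ^ cyc_char t g"
  unfolding cyc_char_def by (rule someI_ex[OF Gal_cyc[OF assms]])


theorem mainTheorem16:
  fixes k :: "complex set" and GG :: "('g, 'c) monoid_scheme" and H :: "('h, 'd) monoid_scheme"
    and \<mu> :: "'g \<Rightarrow> 'h \<Rightarrow> 'h" and \<tau> :: 'h
  assumes "number_field k"
    and "group GG" and "finite (carrier GG)"
    and "comm_group H" and "finite (carrier H)"
    and "\<mu> \<in> hom GG (AutoGroup H)"
    and "\<tau> \<in> carrier H"
  shows "subgroup (G_kmt k GG \<mu> H \<tau>)
           (Gal_group (field_adjoin k {zeta (group.ord H \<tau>)}) k)"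
proof -
  interpret GG: group GG by fact
  interpret H: comm_group H by fact
  have tauH: "\<tau> \<in> carrier H" by fact
  define t where "t = H.ord \<tau>"
  have t1: "t \<ge> 1" unfolding t_def by (rule H.ord_ge_1[OF assms(5,7)])
  define K where "K = field_adjoin k {zeta t}"
  have KF: "cx_subfield K" unfolding K_def by (rule cx_subfield_adjoin)
  have kK: "k \<subseteq> K" unfolding K_def by (rule adjoin_sup(1))
  have zK: "zeta t \<in> K" using adjoin_sup(2)[of "{zeta t}" k] unfolding K_def by simp
  have onek: "1 \<in> k" using assms(1) unfolding number_field_def cx_subfield_def by simp
  interpret Gal: group "Gal_group K k" by (rule Gal_group_group[OF KF kK])
  have carr: "carrier (Gal_group K k) = Gal_set K k" by (simp add: Gal_group_def)
  have Gdef: "G_kmt k GG \<mu> H \<tau> =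
      {g \<in> Gal_set K k. \<exists>g1\<in>carrier GG. \<mu> g1 \<tau> = \<tau> [^]\<^bsub>H\<^esub> cyc_char t g}"
    unfolding G_kmt_def t_def K_def Let_def by simp
  note cyc = cyc_char_spec[OF KF kK onek _ zK t1]
  note gpow = Gal_pow[OF KF kK onek _ zK]
  have zeq: "\<And>j l. zeta t ^ j = zeta t ^ l \<longleftrightarrow> j mod t = l mod t" by (rule zeta_pow_eq[OF t1])
  have taumod: "\<And>n. \<tau> [^]\<^bsub>H\<^esub> n = \<tau> [^]\<^bsub>H\<^esub> (n mod t)"
  proof -
    fix n
    have "\<tau> [^]\<^bsub>H\<^esub> n = \<tau> [^]\<^bsub>H\<^esub> (t * (n div t) + n mod t)" by simp
    also have "\<dots> = (\<tau> [^]\<^bsub>H\<^esub> t) [^]\<^bsub>H\<^esub> (n div t) \<otimes>\<^bsub>H\<^esub> \<tau> [^]\<^bsub>H\<^esub> (n mod t)"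
      using tauH by (simp add: H.nat_pow_mult H.nat_pow_pow)
    also have "\<dots> = \<tau> [^]\<^bsub>H\<^esub> (n mod t)" using tauH unfolding t_def by simp
    finally show "\<tau> [^]\<^bsub>H\<^esub> n = \<tau> [^]\<^bsub>H\<^esub> (n mod t)" .
  qed
  have taueq: "\<And>a b. a mod t = b mod t \<Longrightarrow> \<tau> [^]\<^bsub>H\<^esub> a = \<tau> [^]\<^bsub>H\<^esub> b"
    using taumod by metis
  have muA: "\<And>x. x \<in> carrier GG \<Longrightarrow> \<mu> x \<in> auto H"
    using assms(6) unfolding hom_def AutoGroup_def BijGroup_def by auto
  have mu_hom: "\<And>x. x \<in> carrier GG \<Longrightarrow> \<mu> x \<in> hom H H"
    using muA unfolding auto_def by simp
  have mu_mult: "\<And>x y h. x \<in> carrier GG \<Longrightarrow> y \<in> carrier GG \<Longrightarrow> h \<in> carrier H \<Longrightarrow>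
      \<mu> (x \<otimes>\<^bsub>GG\<^esub> y) h = \<mu> x (\<mu> y h)"
  proof -
    fix x y h assume x: "x \<in> carrier GG" and y: "y \<in> carrier GG" and h: "h \<in> carrier H"
    have "\<mu> (x \<otimes>\<^bsub>GG\<^esub> y) = \<mu> x \<otimes>\<^bsub>AutoGroup H\<^esub> \<mu> y"
      using assms(6) x y by (rule hom_mult)
    also have "\<dots> = compose (carrier H) (\<mu> x) (\<mu> y)"
      using muA[OF x] muA[OF y] unfolding AutoGroup_def BijGroup_def auto_def by simp
    finally show "\<mu> (x \<otimes>\<^bsub>GG\<^esub> y) h = \<mu> x (\<mu> y h)" using h by (simp add: compose_def)
  qed
  have mu_one: "\<mu> \<one>\<^bsub>GG\<^esub> \<tau> = \<tau>"
  proof -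
    have "\<mu> \<one>\<^bsub>GG\<^esub> = \<one>\<^bsub>AutoGroup H\<^esub>"
      by (rule hom_one[OF assms(6) assms(2) H.AutoGroup])
    thus ?thesis using tauH unfolding AutoGroup_def BijGroup_def by simp
  qed
  have mu_pt: "\<And>x (a::nat) n. x \<in> carrier GG \<Longrightarrow> \<mu> x \<tau> = \<tau> [^]\<^bsub>H\<^esub> a \<Longrightarrow>
      \<mu> x (\<tau> [^]\<^bsub>H\<^esub> (n::nat)) = \<tau> [^]\<^bsub>H\<^esub> (a * n)"
  proof -
    fix x and a n :: nat assume x: "x \<in> carrier GG" and e: "\<mu> x \<tau> = \<tau> [^]\<^bsub>H\<^esub> a"
    have "\<mu> x (\<tau> [^]\<^bsub>H\<^esub> n) = (\<mu> x \<tau>) [^]\<^bsub>H\<^esub> n"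
      using hom_nat_pow[OF mu_hom[OF x] tauH H.is_group H.is_group] .
    also have "\<dots> = \<tau> [^]\<^bsub>H\<^esub> (a * n)" using e tauH by (simp add: H.nat_pow_pow)
    finally show "\<mu> x (\<tau> [^]\<^bsub>H\<^esub> n) = \<tau> [^]\<^bsub>H\<^esub> (a * n)" .
  qed
  have mu_gpow: "\<And>x (a::nat) n. x \<in> carrier GG \<Longrightarrow> \<mu> x \<tau> = \<tau> [^]\<^bsub>H\<^esub> a \<Longrightarrow>
      \<mu> (x [^]\<^bsub>GG\<^esub> (n::nat)) \<tau> = \<tau> [^]\<^bsub>H\<^esub> (a ^ n)"
  proof -
    fix x and a n :: nat assume x: "x \<in> carrier GG" and e: "\<mu> x \<tau> = \<tau> [^]\<^bsub>H\<^esub> a"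
    show "\<mu> (x [^]\<^bsub>GG\<^esub> n) \<tau> = \<tau> [^]\<^bsub>H\<^esub> (a ^ n)"
    proof (induction n)
      case 0 thus ?case using mu_one tauH by simp
    next
      case (Suc n)
      have "\<mu> (x [^]\<^bsub>GG\<^esub> Suc n) \<tau> = \<mu> (x [^]\<^bsub>GG\<^esub> n \<otimes>\<^bsub>GG\<^esub> x) \<tau>" by simp
      also have "\<dots> = \<mu> (x [^]\<^bsub>GG\<^esub> n) (\<mu> x \<tau>)"
        using mu_mult[OF GG.nat_pow_closed[OF x] x tauH] .
      also have "\<dots> = \<tau> [^]\<^bsub>H\<^esub> (a ^ n * a)"
        unfolding e by (rule mu_pt[OF GG.nat_pow_closed[OF x] Suc.IH])
      finally show ?case by (simp add: mult.commute)
    qed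
  qed
  show ?thesis unfolding t_def[symmetric] K_def[symmetric] Gdef
  proof (rule Gal.subgroupI)
    show "{g \<in> Gal_set K k. \<exists>g1\<in>carrier GG. \<mu> g1 \<tau> = \<tau> [^]\<^bsub>H\<^esub> cyc_char t g}
        \<subseteq> carrier (Gal_group K k)" unfolding carr by (rule subsetI) simp
  next
    have idG: "id \<in> Gal_set K k" by (rule Gal_setI) simp_all
    define c where "c = cyc_char t id"
    have "zeta t = zeta t ^ c" using cyc[OF idG] unfolding c_def by simp
    hence "zeta t ^ c = zeta t ^ 1" by simp
    hence "c mod t = 1 mod t" by (rule zeq[THEN iffD1])
    hence "\<tau> [^]\<^bsub>H\<^esub> c = \<tau> [^]\<^bsub>H\<^esub> (1::nat)" by (rule taueq)
    hence "\<mu> \<one>\<^bsub>GG\<^esub> \<tau> = \<tau> [^]\<^bsub>H\<^esub> cyc_char t id" using mu_one tauH unfolding c_def by simp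
    hence "id \<in> {g \<in> Gal_set K k. \<exists>g1\<in>carrier GG. \<mu> g1 \<tau> = \<tau> [^]\<^bsub>H\<^esub> cyc_char t g}"
      using idG GG.one_closed by (intro CollectI conjI bexI) assumption+
    thus "{g \<in> Gal_set K k. \<exists>g1\<in>carrier GG. \<mu> g1 \<tau> = \<tau> [^]\<^bsub>H\<^esub> cyc_char t g} \<noteq> {}"
      by (intro notI) simp
  next
    fix g h
    assume gS: "g \<in> {g \<in> Gal_set K k. \<exists>g1\<in>carrier GG. \<mu> g1 \<tau> = \<tau> [^]\<^bsub>H\<^esub> cyc_char t g}"
      and hS: "h \<in> {g \<in> Gal_set K k. \<exists>g1\<in>carrier GG. \<mu> g1 \<tau> = \<tau> [^]\<^bsub>H\<^esub> cyc_char t g}"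
    have g: "g \<in> Gal_set K k" and gE: "\<exists>g1\<in>carrier GG. \<mu> g1 \<tau> = \<tau> [^]\<^bsub>H\<^esub> cyc_char t g"
      using gS by simp_all
    have h: "h \<in> Gal_set K k" and hE: "\<exists>g1\<in>carrier GG. \<mu> g1 \<tau> = \<tau> [^]\<^bsub>H\<^esub> cyc_char t h"
      using hS by simp_all
    obtain g1 where g1: "g1 \<in> carrier GG" "\<mu> g1 \<tau> = \<tau> [^]\<^bsub>H\<^esub> cyc_char t g"
      using gE by (rule bexE)
    obtain h1 where h1: "h1 \<in> carrier GG" "\<mu> h1 \<tau> = \<tau> [^]\<^bsub>H\<^esub> cyc_char t h"
      using hE by (rule bexE)
    define A where "A = cyc_char t g"
    define B where "B = cyc_char t h"
    have gh: "g \<circ> h \<in> Gal_set K k" by (rule Gal_set_comp[OF g h])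
    have "zeta t ^ cyc_char t (g \<circ> h) = (g \<circ> h) (zeta t)" using cyc[OF gh] by simp
    also have "\<dots> = g (zeta t ^ B)" using cyc[OF h] unfolding B_def by simp
    also have "\<dots> = (zeta t ^ A) ^ B" using gpow[OF g, of B] cyc[OF g] unfolding A_def by simp
    also have "\<dots> = zeta t ^ (A * B)" by (simp add: power_mult)
    finally have "cyc_char t (g \<circ> h) mod t = (A * B) mod t" by (rule zeq[THEN iffD1])
    hence e1: "\<tau> [^]\<^bsub>H\<^esub> cyc_char t (g \<circ> h) = \<tau> [^]\<^bsub>H\<^esub> (A * B)" by (rule taueq)
    have "\<mu> (g1 \<otimes>\<^bsub>GG\<^esub> h1) \<tau> = \<mu> g1 (\<mu> h1 \<tau>)" by (rule mu_mult[OF g1(1) h1(1) tauH])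
    also have "\<dots> = \<tau> [^]\<^bsub>H\<^esub> (A * B)" unfolding h1(2) B_def[symmetric]
      by (rule mu_pt[OF g1(1) g1(2)[folded A_def]])
    finally have "\<mu> (g1 \<otimes>\<^bsub>GG\<^esub> h1) \<tau> = \<tau> [^]\<^bsub>H\<^esub> cyc_char t (g \<circ> h)" using e1 by simp
    hence "g \<circ> h \<in> {g \<in> Gal_set K k. \<exists>g1\<in>carrier GG. \<mu> g1 \<tau> = \<tau> [^]\<^bsub>H\<^esub> cyc_char t g}"
      using gh GG.m_closed[OF g1(1) h1(1)] by (intro CollectI conjI bexI) assumption+
    thus "g \<otimes>\<^bsub>Gal_group K k\<^esub> h \<in> {g \<in> Gal_set K k. \<exists>g1\<in>carrier GG. \<mu> g1 \<tau> = \<tau> [^]\<^bsub>H\<^esub> cyc_char t g}"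
      by (simp add: Gal_group_def)
  next
    fix g
    assume gS: "g \<in> {g \<in> Gal_set K k. \<exists>g1\<in>carrier GG. \<mu> g1 \<tau> = \<tau> [^]\<^bsub>H\<^esub> cyc_char t g}"
    have g: "g \<in> Gal_set K k" and gE: "\<exists>g1\<in>carrier GG. \<mu> g1 \<tau> = \<tau> [^]\<^bsub>H\<^esub> cyc_char t g"
      using gS by simp_all
    obtain g1 where g1: "g1 \<in> carrier GG" "\<mu> g1 \<tau> = \<tau> [^]\<^bsub>H\<^esub> cyc_char t g"
      using gE by (rule bexE)
    define h where "h = inv\<^bsub>Gal_group K k\<^esub> g"
    have gc: "g \<in> carrier (Gal_group K k)" using g carr by simp
    have h: "h \<in> Gal_set K k" using Gal.inv_closed[OF gc] carr unfolding h_def by simp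
    have gh: "g \<circ> h = id" using Gal.r_inv[OF gc] unfolding h_def by (simp add: Gal_group_def)
    define A where "A = cyc_char t g"
    define B where "B = cyc_char t h"
    have Acop: "coprime A t" using cyc[OF g] unfolding A_def by simp
    have "zeta t ^ 1 = (g \<circ> h) (zeta t)" using gh by simp
    also have "\<dots> = g (zeta t ^ B)" using cyc[OF h] unfolding B_def by simp
    also have "\<dots> = (zeta t ^ A) ^ B" using gpow[OF g, of B] cyc[OF g] unfolding A_def by simp
    also have "\<dots> = zeta t ^ (A * B)" by (simp add: power_mult)
    finally have AB: "(A * B) mod t = 1 mod t" by (rule zeq[THEN iffD1, symmetric])
    define p where "p = totient t"
    have p0: "p > 0" unfolding p_def using t1 by simp
    have eu: "A ^ p mod t = 1 mod t" using euler_theorem[OF Acop] unfolding p_def cong_def .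
    have "B mod t = (B * (A ^ p mod t)) mod t" using eu by simp
    also have "\<dots> = (B * A ^ p) mod t" by (rule mod_mult_right_eq)
    also have "B * A ^ p = (A * B) * A ^ (p - 1)"
      using p0 by (cases p) (simp_all add: mult.commute mult.left_commute)
    also have "((A * B) * A ^ (p - 1)) mod t = (((A * B) mod t) * A ^ (p - 1)) mod t"
      by (rule mod_mult_left_eq[symmetric])
    also have "\<dots> = A ^ (p - 1) mod t" unfolding AB by (simp add: mod_mult_left_eq)
    finally have "A ^ (p - 1) mod t = B mod t" by simp
    hence e1: "\<tau> [^]\<^bsub>H\<^esub> (A ^ (p - 1)) = \<tau> [^]\<^bsub>H\<^esub> B" by (rule taueq)
    have "\<mu> (g1 [^]\<^bsub>GG\<^esub> (p - 1)) \<tau> = \<tau> [^]\<^bsub>H\<^esub> (A ^ (p - 1))"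
      by (rule mu_gpow[OF g1(1) g1(2)[folded A_def]])
    hence "\<mu> (g1 [^]\<^bsub>GG\<^esub> (p - 1)) \<tau> = \<tau> [^]\<^bsub>H\<^esub> cyc_char t h" using e1 unfolding B_def by simp
    hence "h \<in> {g \<in> Gal_set K k. \<exists>g1\<in>carrier GG. \<mu> g1 \<tau> = \<tau> [^]\<^bsub>H\<^esub> cyc_char t g}"
      using h GG.nat_pow_closed[OF g1(1)] by (intro CollectI conjI bexI) assumption+
    thus "inv\<^bsub>Gal_group K k\<^esub> g \<in> {g \<in> Gal_set K k. \<exists>g1\<in>carrier GG. \<mu> g1 \<tau> = \<tau> [^]\<^bsub>H\<^esub> cyc_char t g}"
      unfolding h_def .
  qed
qed

end
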